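(* Let $\tilde Q=\|q_{ik}\|$ define a $\tilde Q$-expansion of $[0,1]$ with $\inf_{i,k}q_{ik}=q_{\min}>0$, and let $\varPhi$ be the family of its cylindric intervals (interiors of cylinders of all ranks). Then $\varPhi$ is faithful for packing dimension calculation: $\dim_P(E,\varPhi)=\dim_{P(\mathit{unc})}(E)$ for every $E\subset[0,1]$.
   Context: $\tilde Q$-expansion: integers $N_k\ge2$, $q_{ik}>0$ for $k\in\mathbb N$, $i\in\{0,\dots,N_k-1\}$, $\sum_iq_{ik}=1$, $\prod_k\max_iq_{ik}=0$; with $\beta_{ik}=\sum_{l<i}q_{lk}$ each $x\in[0,1]$ is written $x=\sum_k\beta_{a_kk}\prod_{j<k}q_{a_jj}$. The rank-$n$ cylinder $\varDelta_{c_1\dots c_n}$ is the set of $x$ with $a_j(x)=c_j$ for $j\le n$; it is a closed interval of length $\prod_{j\le n}q_{c_jj}$. In $\mathbb R$ with $|A|$ = length: an uncentered $\varepsilon$-packing of $E$ is a countable family of pairwise disjoint open intervals of length $\le\varepsilon$ each meeting $E$; $\mathcal P^\alpha_{\varepsilon(\mathit{unc})}(E)=\sup\sum|E_i|^\alpha$ over these, $\mathcal P^\alpha_{0(\mathit{unc})}=\lim_{\varepsilon\to0}$, $\mathcal P^\alpha_{(\mathit{unc})}(E)=\inf\{\sum_j\mathcal P^\alpha_{0(\mathit{unc})}(E_j):E\subset\bigcup E_j\}$, $\dim_{P(\mathit{unc})}(E)=\inf\{\alpha:\mathcal P^\alpha_{(\mathit{unc})}(E)=0\}$; $\dim_P(E,\varPhi)$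 is defined the same way using only packings by intervals from $\varPhi$. *)

theory Defs
  imports "HOL-Analysis.Analysis"
begin

text \<open>Digits and positions are indexed from 0 (k = 0 is the first digit).
  q i k is the entry q_{ik}; N k is the number of digits at position k.\<close>

definition is_Qtilde :: "(nat \<Rightarrow> nat) \<Rightarrow> (nat \<Rightarrow> nat \<Rightarrow> real) \<Rightarrow> bool" where
  "is_Qtilde N q \<longleftrightarrow>
     (\<forall>k. N k \<ge> 2) \<and>
     (\<forall>k. \<forall>i<N k. q i k > 0) \<and>
     (\<forall>k. (\<Sum>i<N k. q i k) = 1) \<and>
     ((\<lambda>n. \<Prod>k<n. Max ((\<lambda>i. q i k) ` {..<N k})) \<longlonglongrightarrow> 0)"

definition qbeta :: "(nat \<Rightarrow> nat \<Rightarrow> real) \<Rightarrow> nat \<Rightarrow> nat \<Rightarrow> real" where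
  "qbeta q i k = (\<Sum>l<i. q l k)"

definition cyl_left :: "(nat \<Rightarrow> nat \<Rightarrow> real) \<Rightarrow> nat \<Rightarrow> (nat \<Rightarrow> nat) \<Rightarrow> real" where
  "cyl_left q n c = (\<Sum>k<n. qbeta q (c k) k * (\<Prod>j<k. q (c j) j))"

definition cyl_len :: "(nat \<Rightarrow> nat \<Rightarrow> real) \<Rightarrow> nat \<Rightarrow> (nat \<Rightarrow> nat) \<Rightarrow> real" where
  "cyl_len q n c = (\<Prod>j<n. q (c j) j)"

definition cylinder :: "(nat \<Rightarrow> nat \<Rightarrow> real) \<Rightarrow> nat \<Rightarrow> (nat \<Rightarrow> nat) \<Rightarrow> real set" where
  "cylinder q n c = {cyl_left q n c .. cyl_left q n c + cyl_len q n c}"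

definition cylindric_intervals :: "(nat \<Rightarrow> nat) \<Rightarrow> (nat \<Rightarrow> nat \<Rightarrow> real) \<Rightarrow> real set set" where
  "cylindric_intervals N q =
     {interior (cylinder q n c) | n c. n \<ge> 1 \<and> (\<forall>j<n. c j < N j)}"

definition ilen :: "real set \<Rightarrow> real" where
  "ilen I = Sup I - Inf I"

definition open_interval :: "real set \<Rightarrow> bool" where
  "open_interval I \<longleftrightarrow> (\<exists>a b. a < b \<and> I = {a<..<b})"

text \<open>Packings of E by admissible intervals (admissible family Phi) of length \<le> eps.
  For the uncentered packing, Phi = UNIV.\<close>
definition is_packing :: "real set set \<Rightarrow> real \<Rightarrow> real set \<Rightarrow> real set set \<Rightarrow> bool" where
  "is_packing Phi eps E F \<longleftrightarrow>
     countable F \<and> disjoint F \<and>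
     (\<forall>I\<in>F. open_interval I \<and> I \<in> Phi \<and> ilen I \<le> eps \<and> I \<inter> E \<noteq> {})"

definition packing_eps :: "real set set \<Rightarrow> real \<Rightarrow> real \<Rightarrow> real set \<Rightarrow> ennreal" where
  "packing_eps Phi alpha eps E =
     (SUP F \<in> {F. is_packing Phi eps E F}. (\<Sum>\<^sub>\<infinity>I\<in>F. ennreal (ilen I powr alpha)))"

text \<open>P_0 = lim_{eps -> 0}; the premeasure is monotone in eps, so the limit is the infimum.\<close>
definition packing_zero :: "real set set \<Rightarrow> real \<Rightarrow> real set \<Rightarrow> ennreal" where
  "packing_zero Phi alpha E = (INF eps \<in> {0<..}. packing_eps Phi alpha eps E)"

definition packing_measure :: "real set set \<Rightarrow> real \<Rightarrow> real set \<Rightarrow> ennreal" where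
  "packing_measure Phi alpha E =
     (INF C \<in> {C :: nat \<Rightarrow> real set. E \<subseteq> (\<Union>j. C j)}. (\<Sum>j. packing_zero Phi alpha (C j)))"

definition packing_dim :: "real set set \<Rightarrow> real set \<Rightarrow> real" where
  "packing_dim Phi E = Inf {alpha. alpha \<ge> 0 \<and> packing_measure Phi alpha E = 0}"

abbreviation packing_dim_unc :: "real set \<Rightarrow> real" where
  "packing_dim_unc E \<equiv> packing_dim UNIV E"

end

theory Submission
  imports Defs
begin


lemma cyl_left_Suc: "cyl_left q (Suc n) c = cyl_left q n c + qbeta q (c n) n * cyl_len q n c"
  by (simp add: cyl_left_def cyl_len_def)
lemma cyl_len_Suc: "cyl_len q (Suc n) c = cyl_len q n c * q (c n) n"
  by (simp add: cyl_len_def)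
lemma cyl_dep:
  assumes "\<forall>j<n. c j = c' j"
  shows "cyl_left q n c = cyl_left q n c'" "cyl_len q n c = cyl_len q n c'"
    "cylinder q n c = cylinder q n c'"
proof -
  show 1: "cyl_len q n c = cyl_len q n c'" unfolding cyl_len_def using assms by (intro prod.cong) auto
  show 2: "cyl_left q n c = cyl_left q n c'" unfolding cyl_left_def using assms
    by (intro sum.cong refl arg_cong2[where f="(*)"] prod.cong) auto
  show "cylinder q n c = cylinder q n c'" unfolding cylinder_def 1 2 ..
qed

locale qexp =
  fixes N :: "nat \<Rightarrow> nat" and q :: "nat \<Rightarrow> nat \<Rightarrow> real"
  assumes Q: "is_Qtilde N q"
    and qmin: "(INF p \<in> {(i, k). i < N k}. q (fst p) (snd p)) > 0"
begin

definition q0 where "q0 = (INF p \<in> {(i, k). i < N k}. q (fst p) (snd p))"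
definition valid where "valid n c \<longleftrightarrow> (\<forall>j<n. c j < N j)"

lemma q0_pos: "q0 > 0" using qmin q0_def by simp
lemma qpos: "i < N k \<Longrightarrow> q i k > 0" using Q unfolding is_Qtilde_def by auto
lemma qnn: "i < N k \<Longrightarrow> q i k \<ge> 0" using qpos[of i k] by simp
lemma qsum: "(\<Sum>i<N k. q i k) = 1" using Q unfolding is_Qtilde_def by auto
lemma q0_le: assumes "i < N k" shows "q0 \<le> q i k"
proof -
  have "bdd_below ((\<lambda>p. q (fst p) (snd p)) ` {(i, k). i < N k})"
    by (rule bdd_belowI[where m=0]) (auto intro: qnn)
  moreover have "(i,k) \<in> {(i, k). i < N k}" using assms by simp
  ultimately have "(INF p \<in> {(i, k). i < N k}. q (fst p) (snd p)) \<le> q (fst (i,k)) (snd (i,k))"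
    by (meson cINF_lower)
  then show ?thesis unfolding q0_def by simp
qed

lemma qbeta_nonneg: "i \<le> N k \<Longrightarrow> qbeta q i k \<ge> 0"
  unfolding qbeta_def by (intro sum_nonneg) (auto intro: qnn)
lemma qbeta_mono: assumes "i \<le> i'" "i' \<le> N k" shows "qbeta q i k \<le> qbeta q i' k"
proof -
  have "qbeta q i' k = qbeta q i k + (\<Sum>l\<in>{i..<i'}. q l k)"
    unfolding qbeta_def using assms
    by (metis atLeast0LessThan sum.atLeastLessThan_concat zero_le)
  moreover have "(\<Sum>l\<in>{i..<i'}. q l k) \<ge> 0" using assms by (intro sum_nonneg) (auto intro: qnn)
  ultimately show ?thesis by simp
qed
lemma qbeta_Suc: "qbeta q (Suc i) k = qbeta q i k + q i k" unfolding qbeta_def by simp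
lemma qbeta_N: "qbeta q (N k) k = 1" unfolding qbeta_def using qsum by simp
lemma qbeta_0: "qbeta q 0 k = 0" unfolding qbeta_def by simp

lemma cyl_len_pos: "valid n c \<Longrightarrow> cyl_len q n c > 0"
  unfolding cyl_len_def valid_def by (intro prod_pos) (auto intro: qpos)

lemma cyl_nest1: assumes "valid (Suc n) c" shows "cylinder q (Suc n) c \<subseteq> cylinder q n c"
proof -
  have v: "c n < N n" using assms valid_def by auto
  have l: "cyl_len q n c \<ge> 0" using cyl_len_pos[of n c] assms by (auto simp: valid_def)
  have b: "qbeta q (c n) n \<ge> 0" using v qbeta_nonneg by auto
  have b2: "qbeta q (c n) n + q (c n) n \<le> 1"
    using qbeta_mono[of "Suc (c n)" "N n" n] v qbeta_N qbeta_Suc by simp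
  show ?thesis unfolding cylinder_def cyl_left_Suc cyl_len_Suc
  proof (intro subsetI, clarsimp)
    fix x assume a: "cyl_left q n c + qbeta q (c n) n * cyl_len q n c \<le> x"
      "x \<le> cyl_left q n c + qbeta q (c n) n * cyl_len q n c + cyl_len q n c * q (c n) n"
    have "qbeta q (c n) n * cyl_len q n c + cyl_len q n c * q (c n) n \<le> cyl_len q n c"
      using mult_right_mono[OF b2 l] by (simp add: algebra_simps)
    moreover have "qbeta q (c n) n * cyl_len q n c \<ge> 0" using b l by simp
    ultimately show "cyl_left q n c \<le> x \<and> x \<le> cyl_left q n c + cyl_len q n c" using a by linarith
  qed
qed

lemma valid_le: "valid n c \<Longrightarrow> m \<le> n \<Longrightarrow> valid m c" unfolding valid_def by auto

lemma cyl_nest: assumes "valid n c" "m \<le> n" shows "cylinder q n c \<subseteq> cylinder q m c"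
  using assms
proof (induction n)
  case 0 then show ?case by simp
next
  case (Suc n)
  show ?case
  proof (cases "m = Suc n")
    case False
    then have "m \<le> n" using Suc by simp
    then show ?thesis using Suc cyl_nest1[of n c] valid_le[of "Suc n" c n] by auto
  qed simp
qed

lemma cyl_disj:
  assumes "valid n c" "valid n c'" "interior (cylinder q n c) \<inter> interior (cylinder q n c') \<noteq> {}"
  shows "\<forall>j<n. c j = c' j"
proof (rule ccontr)
  assume "\<not> (\<forall>j<n. c j = c' j)"
  then obtain j where j: "j < n" "c j \<noteq> c' j" "\<forall>i<j. c i = c' i"
    using exists_least_iff[of "\<lambda>j. j < n \<and> c j \<noteq> c' j"] by (metis dual_order.strict_trans)
  have sub: "interior (cylinder q n c) \<subseteq> interior (cylinder q (Suc j) c)"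
    "interior (cylinder q n c') \<subseteq> interior (cylinder q (Suc j) c')"
    using interior_mono[OF cyl_nest[of n c "Suc j"]] interior_mono[OF cyl_nest[of n c' "Suc j"]] assms j by auto
  have e: "cyl_left q j c = cyl_left q j c'" "cyl_len q j c = cyl_len q j c'"
    using cyl_dep[of j c c' q] j by auto
  define L where "L = cyl_left q j c"
  define l where "l = cyl_len q j c"
  have lpos: "l \<ge> 0" using cyl_len_pos[of j c] assms j valid_le[of n c j] by (auto simp: l_def)
  have ab: "c j < N j" "c' j < N j" using assms j by (auto simp: valid_def)
  have key: "\<And>a b. a < b \<Longrightarrow> b < N j \<Longrightarrow> {L + qbeta q a j * l <..< L + qbeta q a j * l + l * q a j}
      \<inter> {L + qbeta q b j * l <..< L + qbeta q b j * l + l * q b j} = {}"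
  proof -
    fix a b assume "a < b" "b < N j"
    then have "qbeta q (Suc a) j \<le> qbeta q b j" by (intro qbeta_mono) auto
    then have "qbeta q a j * l + l * q a j \<le> qbeta q b j * l"
      using mult_right_mono[OF _ lpos, of "qbeta q a j + q a j" "qbeta q b j"] unfolding qbeta_Suc by (simp add: algebra_simps)
    then show "{L + qbeta q a j * l <..< L + qbeta q a j * l + l * q a j}
      \<inter> {L + qbeta q b j * l <..< L + qbeta q b j * l + l * q b j} = {}" by auto
  qed
  have "interior (cylinder q (Suc j) c) \<inter> interior (cylinder q (Suc j) c') = {}"
    unfolding cylinder_def interior_atLeastAtMost_real cyl_left_Suc cyl_len_Suc
    using e key[of "c j" "c' j"] key[of "c' j" "c j"] j ab unfolding L_def l_def
    by (cases "c j < c' j") (auto simp: Int_commute)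
  then show False using assms(3) sub by blast
qed

lemma pick:
  assumes "0 \<le> t" "t \<le> 1"
  shows "\<exists>i<N k. qbeta q i k \<le> t \<and> t \<le> qbeta q i k + q i k"
proof -
  define A where "A = {i. i < N k \<and> qbeta q i k \<le> t}"
  have N2: "N k \<ge> 2" using Q unfolding is_Qtilde_def by auto
  have fin: "finite A" unfolding A_def by auto
  have ne: "0 \<in> A" unfolding A_def using N2 qbeta_0 assms by auto
  define i where "i = Max A"
  have iA: "i \<in> A" using fin ne i_def Max_in by blast
  have "t \<le> qbeta q (Suc i) k"
  proof (cases "Suc i < N k")
    case True
    then have "Suc i \<notin> A" using Max_ge[OF fin, of "Suc i"] i_def by auto
    then show ?thesis using True unfolding A_def by auto
  next
    case False
    then have "Suc i = N k" using iA A_def by auto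
    then show ?thesis using qbeta_N assms by simp
  qed
  then show ?thesis using iA unfolding A_def qbeta_Suc by auto
qed

lemma cover: "x \<in> {0..1} \<Longrightarrow> \<exists>c. valid n c \<and> x \<in> cylinder q n c"
proof (induction n)
  case 0
  then show ?case by (auto simp: valid_def cylinder_def cyl_left_def cyl_len_def)
next
  case (Suc n)
  then obtain c where c: "valid n c" "x \<in> cylinder q n c" by blast
  define L where "L = cyl_left q n c"
  define l where "l = cyl_len q n c"
  have lp: "l > 0" using cyl_len_pos c l_def by auto
  have x: "L \<le> x" "x \<le> L + l" using c unfolding cylinder_def L_def l_def by auto
  define t where "t = (x - L) / l"
  have t: "0 \<le> t" "t \<le> 1" using x lp unfolding t_def by (auto simp: field_simps)
  obtain i where i: "i < N n" "qbeta q i n \<le> t" "t \<le> qbeta q i n + q i n" using pick[OF t] by blast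
  define c' where "c' = c(n := i)"
  have ag: "\<forall>j<n. c' j = c j" unfolding c'_def by auto
  have cn: "c' n = i" unfolding c'_def by simp
  have v: "valid (Suc n) c'" using c(1) i unfolding valid_def c'_def by (auto simp: less_Suc_eq)
  have e1: "cyl_left q (Suc n) c' = L + qbeta q i n * l"
    unfolding cyl_left_Suc cn using cyl_dep[OF ag] by (simp add: L_def l_def)
  have e2: "cyl_len q (Suc n) c' = l * q i n"
    unfolding cyl_len_Suc cn using cyl_dep[OF ag] by (simp add: L_def l_def)
  have xt: "x = L + t * l" using lp unfolding t_def by (simp add: field_simps)
  have h1: "qbeta q i n * l \<le> t * l" by (rule mult_right_mono[OF i(2)]) (use lp in simp)
  have "t * l \<le> (qbeta q i n + q i n) * l" by (rule mult_right_mono[OF i(3)]) (use lp in simp)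
  then have h2: "t * l \<le> qbeta q i n * l + l * q i n" by (simp add: algebra_simps)
  note h1 h2
  then have "x \<in> cylinder q (Suc n) c'" unfolding cylinder_def e1 e2 xt by auto
  then show ?case using v by blast
qed

definition G where "G = {x. \<forall>n. \<exists>c. valid n c \<and> x \<in> interior (cylinder q n c)}"

lemma countable_bad:
  assumes "E \<subseteq> {0..1}" shows "countable (E - G)"
proof -
  define D where "D = (\<Union>n. range (\<lambda>l. cyl_left q n (\<lambda>j. l ! j)) \<union>
      range (\<lambda>l. cyl_left q n (\<lambda>j. l ! j) + cyl_len q n (\<lambda>j. l ! j)))"
  have "countable D" unfolding D_def by auto
  moreover have "E - G \<subseteq> D"
  proof
    fix x assume x: "x \<in> E - G"
    then obtain n where n: "\<forall>c. valid n c \<longrightarrow> x \<notin> interior (cylinder q n c)" unfolding G_def by auto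
    obtain c where c: "valid n c" "x \<in> cylinder q n c" using cover[of x n] x assms by (meson DiffD1 subsetD)
    define l where "l = map c [0..<n]"
    have ag: "\<forall>j<n. (\<lambda>j. l ! j) j = c j" unfolding l_def by auto
    have "x \<notin> {cyl_left q n c <..< cyl_left q n c + cyl_len q n c}" using n c(1)
      unfolding cylinder_def by auto
    then have "x = cyl_left q n c \<or> x = cyl_left q n c + cyl_len q n c"
      using c(2) unfolding cylinder_def by auto
    moreover have e: "cyl_left q n (\<lambda>j. l ! j) = cyl_left q n c" "cyl_len q n (\<lambda>j. l ! j) = cyl_len q n c"
      using cyl_dep[OF ag] by auto
    have "cyl_left q n c \<in> range (\<lambda>l. cyl_left q n (\<lambda>j. l ! j))" using e(1) by (metis rangeI)
    moreover have "cyl_left q n c + cyl_len q n c \<in> range (\<lambda>l. cyl_left q n (\<lambda>j. l ! j) + cyl_len q n (\<lambda>j. l ! j))"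
      using e by (metis (no_types, lifting) rangeI)
    ultimately show "x \<in> D" unfolding D_def by blast
  qed
  ultimately show ?thesis by (rule countable_subset[rotated])
qed

definition dig where "dig x n = (SOME c. valid n c \<and> x \<in> interior (cylinder q n c))"

lemma dig: assumes "x \<in> G" shows "valid n (dig x n)" "x \<in> interior (cylinder q n (dig x n))"
proof -
  have "\<exists>c. valid n c \<and> x \<in> interior (cylinder q n c)" using assms G_def by auto
  from someI_ex[OF this] show "valid n (dig x n)" "x \<in> interior (cylinder q n (dig x n))"
    unfolding dig_def by auto
qed

lemma dig_agree: assumes "x \<in> G" "m \<le> n" shows "\<forall>j<m. dig x n j = dig x m j"
proof -
  have "x \<in> interior (cylinder q m (dig x n))"
    using interior_mono[OF cyl_nest[OF dig(1)[OF assms(1)] assms(2)]] dig(2)[OF assms(1)] by auto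
  then show ?thesis using cyl_disj[of m "dig x n" "dig x m"] dig[OF assms(1)] valid_le[OF dig(1)[OF assms(1)] assms(2)]
    by blast
qed

lemma len_le_P: assumes "valid n c"
  shows "cyl_len q n c \<le> (\<Prod>k<n. Max ((\<lambda>i. q i k) ` {..<N k}))"
  unfolding cyl_len_def
proof (rule prod_mono)
  fix k assume k: "k \<in> {..<n}"
  then have "c k < N k" using assms valid_def by auto
  then show "0 \<le> q (c k) k \<and> q (c k) k \<le> Max ((\<lambda>i. q i k) ` {..<N k})" using qnn by (auto intro: Max_ge)
qed


lemma sr_ex: assumes "x \<in> G" "d > 0" shows "\<exists>n. cyl_len q n (dig x n) \<le> d"
proof -
  have "(\<lambda>n. \<Prod>k<n. Max ((\<lambda>i. q i k) ` {..<N k})) \<longlonglongrightarrow> 0" using Q is_Qtilde_def by auto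
  then have "eventually (\<lambda>n. (\<Prod>k<n. Max ((\<lambda>i. q i k) ` {..<N k})) < d) sequentially"
    using assms(2) by (auto dest: order_tendstoD)
  then obtain n where "(\<Prod>k<n. Max ((\<lambda>i. q i k) ` {..<N k})) < d" by (auto simp: eventually_sequentially)
  then show ?thesis using len_le_P[OF dig(1)[OF assms(1), of n]] by (meson less_imp_le order_trans)
qed

definition sr where "sr x d = (LEAST n. cyl_len q n (dig x n) \<le> d)"
definition S where "S x d = cylinder q (sr x d) (dig x (sr x d))"

lemma sr_le: assumes "x \<in> G" "d > 0" shows "cyl_len q (sr x d) (dig x (sr x d)) \<le> d"
  using LeastI_ex[OF sr_ex[OF assms]] unfolding sr_def .

lemma sr_min: assumes "cyl_len q n (dig x n) \<le> d" shows "sr x d \<le> n"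
  unfolding sr_def using assms by (rule Least_le)

lemma sr_pos: assumes "x \<in> G" "0 < d" "d < 1" shows "sr x d \<ge> 1"
proof (rule ccontr)
  assume "\<not> sr x d \<ge> 1"
  then have "sr x d = 0" by simp
  then show False using sr_le[OF assms(1,2)] assms(3) by (simp add: cyl_len_def)
qed

lemma sr_ge: assumes "x \<in> G" "0 < d" "d < 1" shows "cyl_len q (sr x d) (dig x (sr x d)) \<ge> q0 * d"
proof -
  define n where "n = sr x d"
  obtain m where m: "n = Suc m" using sr_pos[OF assms] n_def not0_implies_Suc by fastforce
  have gtd: "cyl_len q m (dig x m) > d"
  proof (rule ccontr)
    assume "\<not> ?thesis"
    then have "sr x d \<le> m" by (intro sr_min) auto
    then show False using m n_def by simp
  qed
  have ag: "\<forall>j<m. dig x n j = dig x m j" using dig_agree[OF assms(1), of m n] m by auto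
  have v: "dig x n m < N m" using dig(1)[OF assms(1), of n] m valid_def by auto
  have "cyl_len q n (dig x n) = cyl_len q m (dig x n) * q (dig x n m) m" using m cyl_len_Suc by simp
  also have "\<dots> = cyl_len q m (dig x m) * q (dig x n m) m" using cyl_dep(2)[OF ag] by simp
  finally have eq: "cyl_len q n (dig x n) = cyl_len q m (dig x m) * q (dig x n m) m" .
  have "q0 * d \<le> q (dig x n m) m * d" using q0_le[OF v] assms(2) by (simp add: mult_right_mono)
  also have "\<dots> \<le> q (dig x n m) m * cyl_len q m (dig x m)"
    using calculation qnn[OF v] \<open>cyl_len q m (dig x m) > d\<close> by (simp add: mult_left_mono)
  finally show ?thesis using eq n_def by (simp add: mult.commute)
qed

lemma S_disj: assumes "x \<in> G" "y \<in> G" "0 < d" "interior (S x d) \<inter> interior (S y d) \<noteq> {}"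
  shows "S x d = S y d"
proof -
  have main: "S x d = S y d" if x: "x \<in> G" and y: "y \<in> G"
    and ne: "interior (S x d) \<inter> interior (S y d) \<noteq> {}" and le: "sr x d \<le> sr y d" for x y
  proof -
    define n1 where "n1 = sr x d"
    define n2 where "n2 = sr y d"
    have "interior (S y d) \<subseteq> interior (cylinder q n1 (dig y n2))"
      unfolding S_def using interior_mono[OF cyl_nest[OF dig(1)[OF y, of n2], of n1]] le n1_def n2_def by auto
    then have "interior (cylinder q n1 (dig x n1)) \<inter> interior (cylinder q n1 (dig y n2)) \<noteq> {}"
      using ne unfolding S_def n1_def n2_def by blast
    then have a1: "\<forall>j<n1. dig x n1 j = dig y n2 j"
      using cyl_disj dig(1)[OF x] valid_le[OF dig(1)[OF y] le] n1_def n2_def by blast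
    have a2: "\<forall>j<n1. dig y n2 j = dig y n1 j" using dig_agree[OF y le] n1_def n2_def by auto
    have "cyl_len q n1 (dig y n1) = cyl_len q n1 (dig x n1)"
      using cyl_dep(2)[of n1 "dig x n1" "dig y n1"] a1 a2 by auto
    also have "\<dots> \<le> d" using sr_le[OF x assms(3)] n1_def by simp
    finally have "n2 \<le> n1" using sr_min n2_def by blast
    then have "n1 = n2" using le n1_def n2_def by simp
    then show ?thesis unfolding S_def using cyl_dep(3)[of n1 "dig x n1" "dig y n2"] a1 n1_def n2_def by auto
  qed
  show ?thesis
  proof (cases "sr x d \<le> sr y d")
    case True then show ?thesis using main assms by blast
  next
    case False then show ?thesis using main[of y x] assms by (auto simp: Int_commute)
  qed
qed

end


lemma ilen_Ioo: "a < b \<Longrightarrow> ilen {a<..<b} = b - a"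
  unfolding ilen_def by simp

lemma oi_pos: "open_interval I \<Longrightarrow> ilen I > 0"
  unfolding open_interval_def using ilen_Ioo by auto

lemma sum_len_le:
  assumes "finite F" "disjoint F" "\<And>I. I \<in> F \<Longrightarrow> open_interval I \<and> I \<subseteq> {u..v}" "u \<le> v"
  shows "(\<Sum>I\<in>F. ilen I) \<le> v - u"
proof -
  have ms: "\<And>I. I \<in> F \<Longrightarrow> I \<in> sets lborel \<and> emeasure lborel I \<noteq> \<infinity> \<and> measure lborel I = ilen I"
  proof -
    fix I assume "I \<in> F"
    then obtain a b where "a < b" "I = {a<..<b}" using assms(3) open_interval_def by blast
    then show "I \<in> sets lborel \<and> emeasure lborel I \<noteq> \<infinity> \<and> measure lborel I = ilen I"
      using ilen_Ioo by simp
  qed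
  have "measure lborel (\<Union>I\<in>F. id I) = (\<Sum>I\<in>F. measure lborel (id I))"
    apply (rule measure_finite_Union[OF assms(1)])
    using ms assms(2) by (auto simp: disjoint_family_on_def disjoint_def)
  then have eq: "measure lborel (\<Union>F) = (\<Sum>I\<in>F. ilen I)" using ms by simp
  have "measure lborel (\<Union>F) \<le> measure lborel {u..v}"
    apply (rule measure_mono_fmeasurable)
    using assms(3) ms assms(1) assms(4) by (auto simp: fmeasurable_def)
  then show ?thesis using eq assms(4) by simp
qed

lemma is_packing_subset: "is_packing Phi eps E F \<Longrightarrow> F' \<subseteq> F \<Longrightarrow> is_packing Phi eps E F'"
  unfolding is_packing_def disjoint_def by (meson countable_subset subsetD)

lemma is_packing_mono_set: "is_packing Phi eps A F \<Longrightarrow> A \<subseteq> B \<Longrightarrow> is_packing Phi eps B F"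
  unfolding is_packing_def by blast

lemma fin_bound:
  assumes "packing_eps Phi alpha eps E \<le> ennreal M" "finite F" "is_packing Phi eps E F" "M \<ge> 0"
  shows "(\<Sum>I\<in>F. ilen I powr alpha) \<le> M"
proof -
  have "ennreal (\<Sum>I\<in>F. ilen I powr alpha) = (\<Sum>I\<in>F. ennreal (ilen I powr alpha))"
    by (rule sum_ennreal[symmetric]) simp
  also have "\<dots> = (\<Sum>\<^sub>\<infinity>I\<in>F. ennreal (ilen I powr alpha))" using assms(2) by simp
  also have "\<dots> \<le> packing_eps Phi alpha eps E" unfolding packing_eps_def
    using assms(3) by (intro SUP_upper) auto
  finally have "ennreal (\<Sum>I\<in>F. ilen I powr alpha) \<le> ennreal M" using assms(1) by simp
  then show ?thesis using assms(4) by simp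
qed

lemma pe_le:
  assumes "\<And>F. finite F \<Longrightarrow> is_packing Phi eps E F \<Longrightarrow> (\<Sum>I\<in>F. ilen I powr alpha) \<le> M"
  shows "packing_eps Phi alpha eps E \<le> ennreal M"
  unfolding packing_eps_def
proof (rule SUP_least, clarsimp)
  fix F assume F: "is_packing Phi eps E F"
  show "(\<Sum>\<^sub>\<infinity>I\<in>F. ennreal (ilen I powr alpha)) \<le> ennreal M"
  proof (rule infsum_le_finite_sums)
    show "(\<lambda>I. ennreal (ilen I powr alpha)) summable_on F" by (rule nonneg_summable_on_complete) simp
    fix F' assume "finite F'" "F' \<subseteq> F"
    then have "(\<Sum>I\<in>F'. ilen I powr alpha) \<le> M" using assms is_packing_subset F by blast
    moreover have "(\<Sum>I\<in>F'. ennreal (ilen I powr alpha)) = ennreal (\<Sum>I\<in>F'. ilen I powr alpha)"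
      by (rule sum_ennreal) simp
    ultimately show "(\<Sum>I\<in>F'. ennreal (ilen I powr alpha)) \<le> ennreal M" by (simp add: ennreal_leI)
  qed
qed

lemma pz_zeroI:
  assumes "\<And>eta. eta > 0 \<Longrightarrow> \<exists>eps>0. packing_eps Phi alpha eps E \<le> ennreal eta"
  shows "packing_zero Phi alpha E = 0"
proof -
  have "packing_zero Phi alpha E \<le> 0 + ennreal e" if "e > 0" for e
  proof -
    obtain eps where ep: "eps > 0" "packing_eps Phi alpha eps E \<le> ennreal e" using assms \<open>e > 0\<close> by blast
    have "eps \<in> {0<..}" using ep by simp
    then have "packing_zero Phi alpha E \<le> packing_eps Phi alpha eps E"
      unfolding packing_zero_def by (rule INF_lower)
    also have "\<dots> \<le> ennreal e" by (rule ep(2))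
    finally show ?thesis by simp
  qed
  then have "packing_zero Phi alpha E \<le> 0" by (rule ennreal_le_epsilon)
  then show ?thesis by simp
qed

lemma pe_mono_set: "A \<subseteq> B \<Longrightarrow> packing_eps Phi alpha eps A \<le> packing_eps Phi alpha eps B"
  unfolding packing_eps_def by (rule SUP_subset_mono) (use is_packing_mono_set in blast, simp)

lemma pe_mono_phi: "packing_eps Phi alpha eps A \<le> packing_eps UNIV alpha eps A"
  unfolding packing_eps_def by (rule SUP_subset_mono) (auto simp: is_packing_def)

lemma pz_mono_phi: "packing_zero Phi alpha A \<le> packing_zero UNIV alpha A"
  unfolding packing_zero_def by (intro INF_mono) (use pe_mono_phi in blast)

lemma pm_mono_phi: "packing_measure Phi alpha A \<le> packing_measure UNIV alpha A"
  unfolding packing_measure_def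
  by (intro INF_mono) (use pz_mono_phi suminf_le in \<open>blast intro: suminf_le\<close>)



lemma pz_single:
  assumes "beta > 0" "S \<subseteq> {x}"
  shows "packing_zero Phi beta S = 0"
proof (rule pz_zeroI)
  fix eta :: real assume eta: "eta > 0"
  define eps where "eps = eta powr (1 / beta)"
  have ep: "eps > 0" using eta eps_def by simp
  have epb: "eps powr beta = eta" using eta assms(1) unfolding eps_def powr_powr by simp
  have "packing_eps Phi beta eps S \<le> ennreal eta"
  proof (rule pe_le)
    fix F assume F: "finite F" "is_packing Phi eps S F"
    show "(\<Sum>I\<in>F. ilen I powr beta) \<le> eta"
    proof (cases "F = {}")
      case True then show ?thesis using eta by simp
    next
      case False
      then obtain I0 where I0: "I0 \<in> F" by blast
      have xin: "\<And>I. I \<in> F \<Longrightarrow> x \<in> I" using F(2) assms(2) unfolding is_packing_def by blast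
      have "F = {I0}"
      proof
        show "F \<subseteq> {I0}"
        proof
          fix I assume "I \<in> F"
          then have "I = I0" using I0 xin F(2) unfolding is_packing_def disjoint_def by blast
          then show "I \<in> {I0}" by simp
        qed
      qed (use I0 in simp)
      moreover have "ilen I0 powr beta \<le> eps powr beta"
        using I0 F(2) assms(1) oi_pos[of I0] unfolding is_packing_def by (intro powr_mono2) auto
      ultimately show ?thesis using epb by simp
    qed
  qed
  then show "\<exists>eps>0. packing_eps Phi beta eps S \<le> ennreal eta" using ep by blast
qed

lemma geo_bound:
  fixes r C :: real
  assumes "0 \<le> r" "r < 1" "C \<ge> 0" "finite T" "\<And>k. k \<in> T \<Longrightarrow> k0 \<le> k"
  shows "(\<Sum>k\<in>T. C * r ^ k) \<le> C * r ^ k0 / (1 - r)"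
proof -
  have inj: "inj_on (\<lambda>k. k - k0) T" using assms(5) by (intro inj_onI) (metis le_add_diff_inverse)
  have "(\<Sum>k\<in>T. r ^ k) = (\<Sum>k\<in>T. r ^ k0 * r ^ (k - k0))"
    using assms(5) by (intro sum.cong refl) (metis le_add_diff_inverse power_add)
  also have "\<dots> = r ^ k0 * (\<Sum>i\<in>(\<lambda>k. k - k0) ` T. r ^ i)"
    by (simp add: sum_distrib_left sum.reindex[OF inj])
  also have "(\<Sum>i\<in>(\<lambda>k. k - k0) ` T. r ^ i) \<le> (\<Sum>i. r ^ i)"
    by (rule sum_le_suminf) (use assms in \<open>auto intro: summable_geometric\<close>)
  then have "r ^ k0 * (\<Sum>i\<in>(\<lambda>k. k - k0) ` T. r ^ i) \<le> r ^ k0 * (1 / (1 - r))"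
    using suminf_geometric[of r] assms by (intro mult_left_mono) auto
  finally have "(\<Sum>k\<in>T. r ^ k) \<le> r ^ k0 / (1 - r)" by simp
  then have "C * (\<Sum>k\<in>T. r ^ k) \<le> C * (r ^ k0 / (1 - r))" using assms(3) by (rule mult_left_mono)
  then show ?thesis by (simp add: sum_distrib_left)
qed

context qexp begin

definition Phi where "Phi = cylindric_intervals N q"

lemma S_props:
  assumes "x \<in> G" "0 < d" "d < 1"
  shows "interior (S x d) \<in> Phi" "open_interval (interior (S x d))" "x \<in> interior (S x d)"
    "ilen (interior (S x d)) \<le> d" "ilen (interior (S x d)) \<ge> q0 * d"
proof -
  define n where "n = sr x d"
  define c where "c = dig x n"
  have v: "valid n c" using dig(1)[OF assms(1)] c_def by simp
  have n1: "n \<ge> 1" using sr_pos[OF assms] n_def by simp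
  have lp: "cyl_len q n c > 0" using cyl_len_pos[OF v] .
  have I: "interior (S x d) = {cyl_left q n c <..< cyl_left q n c + cyl_len q n c}"
    unfolding S_def n_def[symmetric] c_def[symmetric] cylinder_def by simp
  show "interior (S x d) \<in> Phi" unfolding Phi_def cylindric_intervals_def S_def
    using v n1 unfolding n_def c_def valid_def by blast
  show "open_interval (interior (S x d))" unfolding I open_interval_def using lp by (intro exI[of _ "cyl_left q n c"] exI[of _ "cyl_left q n c + cyl_len q n c"]) auto
  show "x \<in> interior (S x d)" using dig(2)[OF assms(1)] unfolding S_def by simp
  have il: "ilen (interior (S x d)) = cyl_len q n c" unfolding I using lp ilen_Ioo by simp
  show "ilen (interior (S x d)) \<le> d" using il sr_le[OF assms(1,2)] n_def c_def by simp
  show "ilen (interior (S x d)) \<ge> q0 * d" using il sr_ge[OF assms] n_def c_def by simp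
qed

lemma class_bound:
  assumes FG: "F \<subseteq> G"
    and H: "\<And>P. finite P \<Longrightarrow> is_packing Phi e0 F P \<Longrightarrow> (\<Sum>J\<in>P. ilen J powr alpha) \<le> 1"
    and al: "0 \<le> alpha" and d: "0 < d" "d < 1" "d \<le> e0"
    and Fk: "finite Fk" "disjoint Fk"
      "\<And>I. I \<in> Fk \<Longrightarrow> open_interval I \<and> I \<inter> F \<noteq> {} \<and> d/2 < ilen I \<and> ilen I \<le> d"
  shows "real (card Fk) * (q0 * d) powr alpha \<le> 6"
proof -
  define xI where "xI I = (SOME x. x \<in> I \<inter> F)" for I
  have xI: "xI I \<in> I \<and> xI I \<in> F" if "I \<in> Fk" for I
  proof -
    have "\<exists>x. x \<in> I \<inter> F" using Fk(3)[OF that] by blast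
    from someI_ex[OF this] show ?thesis unfolding xI_def by blast
  qed
  have xG: "xI I \<in> G" if "I \<in> Fk" for I using xI[OF that] FG by auto
  define phi where "phi I = interior (S (xI I) d)" for I
  define P where "P = phi ` Fk"
  have finP: "finite P" using Fk(1) P_def by simp
  have Pp: "is_packing Phi e0 F P"
    unfolding is_packing_def
  proof (intro conjI ballI)
    show "countable P" using finP by (rule countable_finite)
    show "disjoint P" unfolding disjoint_def
    proof (intro ballI impI)
      fix A B assume A: "A \<in> P" and B: "B \<in> P" and AB: "A \<noteq> B"
      obtain I I' where I: "I \<in> Fk" "A = phi I" and I': "I' \<in> Fk" "B = phi I'" using A B P_def by blast
      show "A \<inter> B = {}"
      proof (rule ccontr)
        assume "A \<inter> B \<noteq> {}"
        then have "S (xI I) d = S (xI I') d" using S_disj[OF xG[OF I(1)] xG[OF I'(1)] d(1)] I I' phi_def by simp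
        then show False using AB I I' phi_def by simp
      qed
    qed
    fix J assume "J \<in> P"
    then obtain I where I: "I \<in> Fk" "J = phi I" using P_def by blast
    show "open_interval J" "J \<in> Phi" using S_props[OF xG[OF I(1)] d(1,2)] I phi_def by auto
    show "ilen J \<le> e0" using S_props(4)[OF xG[OF I(1)] d(1,2)] I phi_def d(3) by auto
    show "J \<inter> F \<noteq> {}" using S_props(3)[OF xG[OF I(1)] d(1,2)] xI[OF I(1)] I phi_def by auto
  qed
  have X0: "(q0 * d) powr alpha \<ge> 0" by simp
  have "(\<Sum>J\<in>P. (q0 * d) powr alpha) \<le> (\<Sum>J\<in>P. ilen J powr alpha)"
  proof (rule sum_mono)
    fix J assume "J \<in> P"
    then obtain I where I: "I \<in> Fk" "J = phi I" using P_def by blast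
    show "(q0 * d) powr alpha \<le> ilen J powr alpha"
      using S_props(5)[OF xG[OF I(1)] d(1,2)] I phi_def al q0_pos d by (intro powr_mono2) auto
  qed
  also have "\<dots> \<le> 1" using H[OF finP Pp] .
  finally have cP: "real (card P) * (q0 * d) powr alpha \<le> 1" by simp
  have fib: "real (card {I \<in> Fk. phi I = J}) \<le> 6" if J: "J \<in> P" for J
  proof -
    obtain I0 where I0: "I0 \<in> Fk" "J = phi I0" using J P_def by blast
    have "open_interval J" using S_props(2)[OF xG[OF I0(1)] d(1,2)] I0 phi_def by simp
    then obtain a b where ab: "a < b" "J = {a<..<b}" unfolding open_interval_def by blast
    have "ilen J \<le> d" using S_props(4)[OF xG[OF I0(1)] d(1,2)] I0 phi_def by simp
    then have bad: "b - a \<le> d" using ab ilen_Ioo by simp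
    define Fb where "Fb = {I \<in> Fk. phi I = J}"
    have finFb: "finite Fb" using Fk(1) Fb_def by simp
    have sub: "I \<subseteq> {a - d .. b + d}" if I: "I \<in> Fb" for I
    proof -
      have IF: "I \<in> Fk" "phi I = J" using I Fb_def by auto
      obtain u v where uv: "u < v" "I = {u<..<v}" using Fk(3)[OF IF(1)] open_interval_def by blast
      have "ilen I \<le> d" using Fk(3)[OF IF(1)] by simp
      then have vu: "v - u \<le> d" using uv ilen_Ioo by simp
      have "xI I \<in> I" using xI[OF IF(1)] by simp
      moreover have "xI I \<in> J" using S_props(3)[OF xG[OF IF(1)] d(1,2)] IF phi_def by simp
      ultimately show ?thesis using uv ab vu by auto
    qed
    have "(\<Sum>I\<in>Fb. ilen I) \<le> (b + d) - (a - d)"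
      apply (rule sum_len_le[OF finFb])
      using Fk(2) Fb_def unfolding disjoint_def apply blast
      using sub Fk(3) Fb_def apply blast
      using ab d by simp
    moreover have "(\<Sum>I\<in>Fb. d / 2) \<le> (\<Sum>I\<in>Fb. ilen I)"
      using Fk(3) Fb_def by (intro sum_mono) (auto intro: less_imp_le)
    ultimately have "real (card Fb) * (d / 2) \<le> 3 * d" using bad by simp
    then have "real (card Fb) \<le> 6" using d(1) by (simp add: field_simps)
    then show ?thesis using Fb_def by simp
  qed
  have "real (card Fk) = (\<Sum>J\<in>P. (\<Sum>I\<in>{I \<in> Fk. phi I = J}. (1::real)))"
    using sum.group[OF Fk(1) finP, of phi "\<lambda>_. 1::real"] P_def by simp
  also have "\<dots> \<le> (\<Sum>J\<in>P. 6)" using fib by (intro sum_mono) simp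
  finally have "real (card Fk) \<le> 6 * real (card P)" by simp
  then have "real (card Fk) * (q0 * d) powr alpha \<le> 6 * (real (card P) * (q0 * d) powr alpha)"
    using X0 by (metis mult.assoc mult_right_mono)
  also have "\<dots> \<le> 6" using cP by simp
  finally show ?thesis .
qed

lemma main_pz:
  assumes FG: "F \<subseteq> G" and e0: "e0 > 0"
    and H: "\<And>P. finite P \<Longrightarrow> is_packing Phi e0 F P \<Longrightarrow> (\<Sum>J\<in>P. ilen J powr alpha) \<le> 1"
    and al: "0 \<le> alpha" and ab: "alpha < beta"
  shows "packing_zero UNIV beta F = 0"
proof (rule pz_zeroI)
  fix eta :: real assume eta: "eta > 0"
  define r where "r = (1/2::real) powr (beta - alpha)"
  have r0: "0 < r" unfolding r_def by simp
  have r1: "r < 1" unfolding r_def using powr_less_mono2[of "beta - alpha" "1/2" 1] ab by simp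
  define C where "C = 6 / q0 powr alpha"
  have C0: "C > 0" unfolding C_def using q0_pos by simp
  have ev1: "eventually (\<lambda>k. (1/2::real)^k < e0) sequentially"
    using order_tendstoD(2)[OF LIMSEQ_realpow_zero[of "1/2::real"] e0] by simp
  have ev2: "eventually (\<lambda>k. r^k < eta * (1 - r) / C) sequentially"
    using order_tendstoD(2)[OF LIMSEQ_realpow_zero[of r]] r0 r1 eta C0 by simp
  have ev3: "eventually (\<lambda>k. 1 \<le> k) sequentially" by (rule eventually_ge_at_top)
  obtain k0 where k0: "(1/2::real)^k0 < e0" "r^k0 < eta * (1 - r) / C" "1 \<le> k0"
    using eventually_happens'[OF _ eventually_conj[OF ev1 eventually_conj[OF ev2 ev3]]] by auto
  define eps where "eps = (1/2::real)^k0"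
  have eps0: "eps > 0" unfolding eps_def by simp
  have eps1: "eps \<le> 1/2" unfolding eps_def using k0(3) power_decreasing[of 1 k0 "1/2::real"] by simp
  have "packing_eps UNIV beta eps F \<le> ennreal eta"
  proof (rule pe_le)
    fix Fin assume Fin: "finite Fin" "is_packing UNIV eps F Fin"
    have Ip: "open_interval I \<and> I \<inter> F \<noteq> {} \<and> ilen I \<le> eps \<and> 0 < ilen I" if "I \<in> Fin" for I
      using Fin(2) that oi_pos unfolding is_packing_def by auto
    define cls where "cls I = (LEAST k. (1/2::real)^(Suc k) < ilen I)" for I
    have cls: "(1/2::real)^(Suc (cls I)) < ilen I \<and> ilen I \<le> (1/2)^(cls I) \<and> k0 \<le> cls I"
      if I: "I \<in> Fin" for I
    proof -
      have "eventually (\<lambda>k. (1/2::real)^k < ilen I) sequentially"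
        using order_tendstoD(2)[OF LIMSEQ_realpow_zero[of "1/2::real"]] Ip[OF I] by simp
      then obtain m where m: "(1/2::real)^m < ilen I" by (auto simp: eventually_sequentially)
      have "(1/2::real)^(Suc m) \<le> (1/2)^m" by (rule power_decreasing) auto
      then have "(1/2::real)^(Suc m) < ilen I" using m by linarith
      then have ex: "\<exists>k. (1/2::real)^(Suc k) < ilen I" by blast
      have A: "(1/2::real)^(Suc (cls I)) < ilen I" using LeastI_ex[OF ex] cls_def by simp
      have B: "ilen I \<le> (1/2)^(cls I)"
      proof (cases "cls I")
        case 0 then show ?thesis using Ip[OF I] eps1 by simp
      next
        case (Suc m)
        then have "\<not> (1/2::real)^(Suc m) < ilen I" using not_less_Least[of m "\<lambda>k. (1/2::real)^(Suc k) < ilen I"]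
          cls_def by simp
        then show ?thesis using Suc by simp
      qed
      have Cc: "k0 \<le> cls I"
      proof (rule ccontr)
        assume "\<not> k0 \<le> cls I"
        then have "Suc (cls I) \<le> k0" by simp
        then have "(1/2::real)^k0 \<le> (1/2)^(Suc (cls I))" by (intro power_decreasing) auto
        then show False using A Ip[OF I] eps_def by simp
      qed
      show ?thesis using A B Cc by simp
    qed
    have inner: "(\<Sum>I\<in>{I \<in> Fin. cls I = k}. ilen I powr beta) \<le> C * r ^ k" if k: "k \<in> cls ` Fin" for k
    proof -
      define d where "d = (1/2::real)^k"
      define Fk where "Fk = {I \<in> Fin. cls I = k}"
      have kk: "k0 \<le> k" using k cls by auto
      have d0: "0 < d" unfolding d_def by simp
      have dle: "d \<le> (1/2)^k0" unfolding d_def using kk by (intro power_decreasing) auto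
      have d1: "d < 1" using dle eps1 eps_def by simp
      have de: "d \<le> e0" using dle k0(1) by simp
      have finFk: "finite Fk" using Fin(1) Fk_def by simp
      have cb: "real (card Fk) * (q0 * d) powr alpha \<le> 6"
      proof (rule class_bound[OF FG H al d0 d1 de finFk])
        show "disjoint Fk" using Fin(2) Fk_def unfolding is_packing_def disjoint_def by blast
        fix I assume I: "I \<in> Fk"
        then have "I \<in> Fin" "cls I = k" using Fk_def by auto
        then show "open_interval I \<and> I \<inter> F \<noteq> {} \<and> d / 2 < ilen I \<and> ilen I \<le> d"
          using Ip cls d_def by auto
      qed
      have "(\<Sum>I\<in>Fk. ilen I powr beta) \<le> (\<Sum>I\<in>Fk. d powr beta)"
      proof (rule sum_mono)
        fix I assume "I \<in> Fk"
        then have I: "I \<in> Fin" "cls I = k" using Fk_def by auto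
        then show "ilen I powr beta \<le> d powr beta" using Ip[OF I(1)] cls[OF I(1)] d_def al ab by (intro powr_mono2) auto
      qed
      also have "\<dots> = real (card Fk) * d powr beta" by simp
      also have "d powr beta = d powr alpha * d powr (beta - alpha)" by (simp add: powr_add[symmetric])
      also have "d powr (beta - alpha) = r ^ k"
      proof -
        have "d = (1/2::real) powr (real k)" unfolding d_def by (simp add: powr_realpow)
        then have "d powr (beta - alpha) = (1/2::real) powr (real k * (beta - alpha))" by (simp add: powr_powr)
        also have "\<dots> = r powr (real k)" unfolding r_def by (simp add: powr_powr mult.commute)
        also have "\<dots> = r ^ k" using r0 by (simp add: powr_realpow)
        finally show ?thesis .
      qed
      also have "real (card Fk) * (d powr alpha * r ^ k) = (real (card Fk) * (q0 * d) powr alpha) / q0 powr alpha * r ^ k"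
        using q0_pos d0 by (simp add: powr_mult)
      also have "\<dots> \<le> 6 / q0 powr alpha * r ^ k"
        using cb q0_pos r0 by (intro mult_right_mono divide_right_mono) auto
      finally show ?thesis unfolding C_def Fk_def .
    qed
    have "(\<Sum>I\<in>Fin. ilen I powr beta) = (\<Sum>k\<in>cls ` Fin. \<Sum>I\<in>{I \<in> Fin. cls I = k}. ilen I powr beta)"
      using sum.group[OF Fin(1) finite_imageI[OF Fin(1)], where g=cls and h="\<lambda>I. ilen I powr beta"] by simp
    also have "\<dots> \<le> (\<Sum>k\<in>cls ` Fin. C * r ^ k)" using inner by (rule sum_mono)
    also have "\<dots> \<le> C * r ^ k0 / (1 - r)"
      using cls Fin(1) r0 r1 C0 by (intro geo_bound) auto
    also have "\<dots> \<le> eta"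
    proof -
      have "C * r ^ k0 < eta * (1 - r)" using k0(2) C0 by (simp add: pos_less_divide_eq mult.commute)
      then show ?thesis using r1 by (simp add: field_simps)
    qed
    finally show "(\<Sum>I\<in>Fin. ilen I powr beta) \<le> eta" .
  qed
  then show "\<exists>eps>0. packing_eps UNIV beta eps F \<le> ennreal eta" using eps0 by blast
qed

end


context qexp begin

lemma dir2:
  assumes E: "E \<subseteq> {0..1}" and al: "0 \<le> alpha" and pm: "packing_measure Phi alpha E = 0"
    and ab: "alpha < beta"
  shows "packing_measure UNIV beta E = 0"
proof -
  have "packing_measure Phi alpha E < 1" using pm by simp
  then obtain C where C: "E \<subseteq> (\<Union>j. C j)" "(\<Sum>j. packing_zero Phi alpha (C j)) < 1"
    unfolding packing_measure_def by (auto simp: INF_less_iff)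
  have pzC: "packing_zero Phi alpha (C j) < 1" for j
  proof -
    have "(\<Sum>i\<in>{j}. packing_zero Phi alpha (C i)) \<le> (\<Sum>j. packing_zero Phi alpha (C j))"
      by (rule sum_le_suminf) (auto intro: summableI)
    then show ?thesis using C(2) by simp
  qed
  have pz0: "packing_zero UNIV beta (C j \<inter> G) = 0" for j
  proof -
    obtain e where e: "e > 0" "packing_eps Phi alpha e (C j) < 1"
      using pzC[of j] unfolding packing_zero_def by (auto simp: INF_less_iff)
    have pe: "packing_eps Phi alpha e (C j \<inter> G) \<le> ennreal 1"
      using pe_mono_set[of "C j \<inter> G" "C j" Phi alpha e] e(2) by simp
    show ?thesis
    proof (rule main_pz[of "C j \<inter> G" e alpha beta])
      fix P assume "finite P" "is_packing Phi e (C j \<inter> G) P"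
      then show "(\<Sum>J\<in>P. ilen J powr alpha) \<le> 1" using fin_bound[OF pe] by simp
    qed (use e al ab in simp_all)
  qed
  define B where "B = E - G"
  have cB: "countable B" using countable_bad[OF E] B_def by simp
  define C' where "C' n = (if even n then C (n div 2) \<inter> G else {from_nat_into B (n div 2)} \<inter> B)" for n
  have pzC': "packing_zero UNIV beta (C' n) = 0" for n
  proof (cases "even n")
    case True then show ?thesis using pz0 C'_def by simp
  next
    case False then show ?thesis using pz_single[of beta "C' n" "from_nat_into B (n div 2)" UNIV] al ab C'_def
      by auto
  qed
  have cov: "E \<subseteq> (\<Union>n. C' n)"
  proof
    fix x assume x: "x \<in> E"
    show "x \<in> (\<Union>n. C' n)"
    proof (cases "x \<in> G")
      case True
      obtain j where "x \<in> C j" using x C(1) by blast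
      then have "x \<in> C' (2 * j)" using True C'_def by simp
      then show ?thesis by blast
    next
      case False
      then have xB: "x \<in> B" using x B_def by simp
      then have "B \<noteq> {}" by auto
      then have "x \<in> range (from_nat_into B)" using range_from_nat_into[OF _ cB] xB by simp
      then obtain m where m: "x = from_nat_into B m" by blast
      have "x \<in> C' (2 * m + 1)" using m xB C'_def by simp
      then show ?thesis by blast
    qed
  qed
  have "packing_measure UNIV beta E \<le> (\<Sum>n. packing_zero UNIV beta (C' n))"
    unfolding packing_measure_def by (rule INF_lower) (use cov in simp)
  also have "\<dots> = 0" using pzC' by simp
  finally show ?thesis by simp
qed

end

theorem theorem6:
  fixes N :: "nat \<Rightarrow> nat" and q :: "nat \<Rightarrow> nat \<Rightarrow> real" and E :: "real set"
  assumes "is_Qtilde N q"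
    and "(INF p \<in> {(i, k). i < N k}. q (fst p) (snd p)) > 0"
    and "E \<subseteq> {0..1}"
  shows "packing_dim (cylindric_intervals N q) E = packing_dim_unc E"
proof -
  interpret qexp N q by unfold_locales (use assms in auto)
  define SP where "SP = {alpha. alpha \<ge> 0 \<and> packing_measure (cylindric_intervals N q) alpha E = 0}"
  define SU where "SU = {alpha. alpha \<ge> 0 \<and> packing_measure UNIV alpha E = 0}"
  have eq1: "packing_dim (cylindric_intervals N q) E = Inf SP" unfolding packing_dim_def SP_def ..
  have eq2: "packing_dim_unc E = Inf SU" unfolding packing_dim_def SU_def ..
  have sub: "SU \<subseteq> SP"
  proof
    fix x assume "x \<in> SU"
    then have x: "x \<ge> 0" "packing_measure UNIV x E = 0" unfolding SU_def by auto
    have "packing_measure (cylindric_intervals N q) x E \<le> packing_measure UNIV x E" by (rule pm_mono_phi)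
    then have "packing_measure (cylindric_intervals N q) x E = 0" using x(2) by simp
    then show "x \<in> SP" using x(1) unfolding SP_def by simp
  qed
  have up: "alpha + e \<in> SU" if "alpha \<in> SP" "e > 0" for alpha e
    using dir2[OF assms(3), of alpha "alpha + e"] that unfolding SP_def SU_def Phi_def by auto
  have bP: "bdd_below SP" unfolding SP_def by (rule bdd_belowI[where m=0]) auto
  have bU: "bdd_below SU" unfolding SU_def by (rule bdd_belowI[where m=0]) auto
  show ?thesis
  proof (cases "SP = {}")
    case True
    then have "SU = {}" using sub by auto
    then show ?thesis using True eq1 eq2 by simp
  next
    case False
    then obtain a where a: "a \<in> SP" by blast
    then have neU: "SU \<noteq> {}" using up[of a 1] by auto
    have le1: "Inf SP \<le> Inf SU" by (rule cInf_superset_mono[OF neU bP sub])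
    have le2: "Inf SU \<le> Inf SP"
    proof (rule field_le_epsilon)
      fix e :: real assume e: "e > 0"
      have "Inf SP < Inf SP + e / 2" using e by simp
      then obtain al where al: "al \<in> SP" "al < Inf SP + e / 2" using cInf_lessD[OF False] by blast
      have "Inf SU \<le> al + e / 2" using up[OF al(1)] e by (intro cInf_lower bU) auto
      then show "Inf SU \<le> Inf SP + e" using al(2) by simp
    qed
    show ?thesis using le1 le2 eq1 eq2 by simp
  qed
qed


end
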